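(* Let $G$ be a simple connected graph with $n$ vertices and $m$ edges, let $k\ge1$ be an integer, and let $S_k(G)$ be the $k$-parallel subdivision graph of $G$. If $\sigma\neq 1$ is an eigenvalue of $\mathscr{L}(S_k(G))$, then $4\sigma-2\sigma^2$ is an eigenvalue of $\mathscr{L}(G)$, and its multiplicity is the same as that of $\sigma$.
   Context: For a graph $H$ with adjacency matrix $A(H)$ and diagonal degree matrix $D(H)$ (no isolated vertices), the normalized Laplacian is $\mathscr{L}(H)=I-D(H)^{-1/2}A(H)D(H)^{-1/2}$. The $k$-parallel subdivision graph $S_k(G)$ is obtained from $G$ by replacing each edge $uv$ of $G$ by $k$ internally disjoint paths $u-w-v$ of length $2$ (each with its own new middle vertex $w$). *)

theory Defs
  imports "Jordan_Normal_Form.Char_Poly"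
begin

definition simple_graph :: "'a set \<Rightarrow> ('a \<Rightarrow> 'a \<Rightarrow> bool) \<Rightarrow> bool" where
  "simple_graph V E \<longleftrightarrow> finite V \<and> (\<forall>u v. E u v \<longrightarrow> u \<in> V \<and> v \<in> V)
     \<and> (\<forall>u v. E u v \<longrightarrow> E v u) \<and> (\<forall>u. \<not> E u u)"

definition connected_graph :: "'a set \<Rightarrow> ('a \<Rightarrow> 'a \<Rightarrow> bool) \<Rightarrow> bool" where
  "connected_graph V E \<longleftrightarrow> V \<noteq> {} \<and> (\<forall>u\<in>V. \<forall>v\<in>V. E\<^sup>*\<^sup>* u v)"

definition degree :: "'a set \<Rightarrow> ('a \<Rightarrow> 'a \<Rightarrow> bool) \<Rightarrow> 'a \<Rightarrow> nat" where
  "degree V E v = card {u\<in>V. E v u}"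

definition vertex_enum :: "'a set \<Rightarrow> nat \<Rightarrow> 'a" where
  "vertex_enum V = (SOME f. bij_betw f {..<card V} V)"

definition adj_matrix :: "'a set \<Rightarrow> ('a \<Rightarrow> 'a \<Rightarrow> bool) \<Rightarrow> real mat" where
  "adj_matrix V E = mat (card V) (card V)
     (\<lambda>(i,j). if E (vertex_enum V i) (vertex_enum V j) then 1 else 0)"

definition deg_matrix :: "'a set \<Rightarrow> ('a \<Rightarrow> 'a \<Rightarrow> bool) \<Rightarrow> real mat" where
  "deg_matrix V E = mat (card V) (card V)
     (\<lambda>(i,j). if i = j then real (degree V E (vertex_enum V i)) else 0)"

definition deg_inv_sqrt_matrix :: "'a set \<Rightarrow> ('a \<Rightarrow> 'a \<Rightarrow> bool) \<Rightarrow> real mat" where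
  "deg_inv_sqrt_matrix V E = mat (card V) (card V)
     (\<lambda>(i,j). if i = j then 1 / sqrt (real (degree V E (vertex_enum V i))) else 0)"

definition norm_laplacian :: "'a set \<Rightarrow> ('a \<Rightarrow> 'a \<Rightarrow> bool) \<Rightarrow> real mat" where
  "norm_laplacian V E = 1\<^sub>m (card V) - deg_inv_sqrt_matrix V E * adj_matrix V E * deg_inv_sqrt_matrix V E"

definition graph_edges :: "'a set \<Rightarrow> ('a \<Rightarrow> 'a \<Rightarrow> bool) \<Rightarrow> 'a set set" where
  "graph_edges V E = {{u, v} | u v. u \<in> V \<and> v \<in> V \<and> E u v}"

text \<open>k-parallel subdivision graph: original vertices Inl v; for each edge e and each j<k
  a new middle vertex Inr (e, j) adjacent exactly to the two endpoints of e.\<close>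
definition subdiv_vertices :: "nat \<Rightarrow> 'a set \<Rightarrow> ('a \<Rightarrow> 'a \<Rightarrow> bool) \<Rightarrow> ('a + 'a set \<times> nat) set" where
  "subdiv_vertices k V E = Inl ` V \<union> Inr ` (graph_edges V E \<times> {..<k})"

definition subdiv_adj :: "nat \<Rightarrow> 'a set \<Rightarrow> ('a \<Rightarrow> 'a \<Rightarrow> bool)
    \<Rightarrow> ('a + 'a set \<times> nat) \<Rightarrow> ('a + 'a set \<times> nat) \<Rightarrow> bool" where
  "subdiv_adj k V E x y \<longleftrightarrow>
     (\<exists>u e j. u \<in> V \<and> e \<in> graph_edges V E \<and> j < k \<and> u \<in> e \<and>
        ((x = Inl u \<and> y = Inr (e, j)) \<or> (x = Inr (e, j) \<and> y = Inl u)))"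

end

theory Submission
  imports Defs
begin

lemma pcompose_pow: "pcompose (p ^ n) q = (pcompose p q) ^ n"
  by (induction n) (simp_all add: pcompose_mult pcompose_1)

lemma aux_pow: "(Polynomial.smult (c::real) (a * b)) ^ n * h = Polynomial.smult (c^n) (a^n * (b^n * h))"
  by (simp add: smult_power power_mult_distrib mult.assoc)

lemma order_pcompose_quad:
  fixes P :: "real poly" and s :: real
  assumes P: "P \<noteq> 0" and s: "s \<noteq> 1"
  shows "order s (pcompose P [:0, 4, -2:]) = order (4 * s - 2 * s\<^sup>2) P"
proof -
  define l where "l = 4 * s - 2 * s\<^sup>2"
  obtain g where g: "P = [:-l,1:] ^ order l P * g" and ndvd: "\<not> [:-l,1:] dvd g"
    using order_decomp[OF P] by blast
  have gl: "poly g l \<noteq> 0" using ndvd poly_eq_0_iff_dvd by blast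
  have lin: "pcompose [:-l,1:] [:0, 4, -2:] = Polynomial.smult (-2) ([:-s,1:] * [:-(2-s),1:])"
    by (simp add: l_def pcompose_pCons algebra_simps power2_eq_square)
  have "pcompose P [:0, 4, -2:] = (Polynomial.smult (-2) ([:-s,1:] * [:-(2-s),1:])) ^ order l P * pcompose g [:0, 4, -2:]"
    apply (subst g) by (simp only: pcompose_mult pcompose_pow lin)
  also have "\<dots> = Polynomial.smult ((-2) ^ order l P) ([:-s,1:] ^ order l P * ([:-(2-s),1:] ^ order l P * pcompose g [:0, 4, -2:]))"
    by (rule aux_pow)
  finally have eq: "pcompose P [:0, 4, -2:] = \<dots>" .
  have pg: "poly (pcompose g [:0, 4, -2:]) s \<noteq> 0"
    using gl by (simp add: poly_pcompose l_def algebra_simps power2_eq_square)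
  have nz1: "[:-(2-s),1:] ^ order l P \<noteq> 0" by simp
  have nz2: "pcompose g [:0, 4, -2:] \<noteq> 0" using pg by auto
  have o1: "order s ([:s-2,1:] ^ order l P) = 0"
    by (rule order_0I) (use s in \<open>simp\<close>)
  have o2: "order s (pcompose g [:0, 4, -2:]) = 0" by (rule order_0I[OF pg])
  show ?thesis unfolding eq l_def[symmetric]
    apply (subst order_smult, simp)
    apply (subst order_mult, simp add: nz2)
    apply (subst order_mult, simp add: nz2)
    by (simp add: order_power_n_n o1 o2)
qed

lemma charpoly_eval:
  fixes A :: "'b::field mat"
  assumes A: "A \<in> carrier_mat n n"
  shows "poly (char_poly A) x = det (mat n n (\<lambda>(i,j). (if i = j then x else 0) - A $$ (i,j)))"
  unfolding char_poly_def
  by (rule poly_det_cong[of _ n], insert A, auto simp: char_poly_matrix_def)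

lemma det_reindex:
  fixes F :: "'v \<Rightarrow> 'v \<Rightarrow> 'b::comm_ring_1"
  assumes e1: "bij_betw e1 {..<N} S" and e2: "bij_betw e2 {..<N} S"
  shows "det (mat N N (\<lambda>(i,j). F (e1 i) (e1 j))) = det (mat N N (\<lambda>(i,j). F (e2 i) (e2 j)))"
proof -
  define p where "p i = (if i < N then the_inv_into {..<N} e2 (e1 i) else i)" for i
  have bij: "bij_betw (the_inv_into {..<N} e2 \<circ> e1) {..<N} {..<N}"
    by (rule bij_betw_trans[OF e1 bij_betw_the_inv_into[OF e2]])
  have "bij_betw p {..<N} {..<N}"
    by (rule bij_betw_cong[THEN iffD1, OF _ bij]) (auto simp: p_def)
  hence pp: "p permutes {0..<N}"
    by (intro bij_imp_permutes) (auto simp: p_def lessThan_atLeast0[symmetric])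
  have pN: "i < N \<Longrightarrow> p i < N" for i
    using pp by (metis atLeastLessThan_iff le0 permutes_in_image)
  have e1p: "i < N \<Longrightarrow> e1 i = e2 (p i)" for i
    unfolding p_def using e1 e2
    by (simp add: bij_betwE f_the_inv_into_f_bij_betw)
  define A2 where "A2 = mat N N (\<lambda>(i,j). F (e2 i) (e2 j))"
  have A2: "A2 \<in> carrier_mat N N" by (simp add: A2_def)
  define B where "B = mat N N (\<lambda>(i,j). A2 $$ (p i, j))"
  have B: "B \<in> carrier_mat N N" by (simp add: B_def)
  have dB: "det B = signof p * det A2" unfolding B_def by (rule det_permute_rows[OF A2 pp])
  have eq: "mat N N (\<lambda>(i,j). F (e1 i) (e1 j)) = transpose_mat (mat N N (\<lambda>(i,j). (transpose_mat B) $$ (p i, j)))"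
    by (rule eq_matI) (auto simp: B_def A2_def pN e1p)
  have "det (mat N N (\<lambda>(i,j). F (e1 i) (e1 j))) = det (mat N N (\<lambda>(i,j). (transpose_mat B) $$ (p i, j)))"
    unfolding eq by (rule det_transpose[of _ N]) simp
  also have "\<dots> = signof p * det (transpose_mat B)"
    by (rule det_permute_rows[OF _ pp]) (simp add: B)
  also have "\<dots> = signof p * signof p * det A2"
    using det_transpose[OF B] dB by simp
  also have "signof p * signof p = (1::'b)"
    by (cases p rule: sign_cases) simp_all
  finally show ?thesis by (simp add: A2_def)
qed

lemma ve_bij: "finite V \<Longrightarrow> bij_betw (vertex_enum V) {..<card V} V"
proof -
  assume "finite V"
  then obtain h where "bij_betw h {0..<card V} V" using ex_bij_betw_nat_finite by blast
  then have "bij_betw h {..<card V} V" by (simp add: lessThan_atLeast0)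
  then show ?thesis unfolding vertex_enum_def by (rule someI[where x = h])
qed

lemma diag_mult_entry:
  fixes X :: "real mat"
  assumes X: "X \<in> carrier_mat n n" and i: "i < n" and j: "j < n"
  shows "(mat n n (\<lambda>(i,j). if i = j then f i else 0) * X * mat n n (\<lambda>(i,j). if i = j then g i else 0)) $$ (i,j)
     = f i * X $$ (i,j) * g j"
proof -
  let ?D1 = "mat n n (\<lambda>(i,j). if i = j then f i else 0)"
  let ?D2 = "mat n n (\<lambda>(i,j). if i = j then g i else 0)"
  have 1: "(?D1 * X) $$ (i,l) = f i * X $$ (i,l)" if l: "l < n" for l
  proof -
    have "(?D1 * X) $$ (i,l) = (\<Sum>m\<in>{0..<n}. ?D1 $$ (i,m) * X $$ (m,l))"
      using X i l by (simp add: scalar_prod_def)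
    also have "\<dots> = (\<Sum>m\<in>{0..<n}. if m = i then f i * X $$ (m,l) else 0)"
      using i by (intro sum.cong) auto
    also have "\<dots> = f i * X $$ (i,l)" using i by simp
    finally show ?thesis .
  qed
  have "(?D1 * X * ?D2) $$ (i,j) = (\<Sum>m\<in>{0..<n}. (?D1 * X) $$ (i,m) * ?D2 $$ (m,j))"
    using X i j by (simp add: scalar_prod_def)
  also have "\<dots> = (\<Sum>m\<in>{0..<n}. if m = j then f i * X $$ (i,j) * g j else 0)"
    using j 1 by (intro sum.cong) auto
  also have "\<dots> = f i * X $$ (i,j) * g j" using j by simp
  finally show ?thesis .
qed

definition Lf :: "'a set \<Rightarrow> ('a \<Rightarrow> 'a \<Rightarrow> bool) \<Rightarrow> 'a \<Rightarrow> 'a \<Rightarrow> real" where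
  "Lf V E y z = (if y = z then 1 else 0) - (if E y z then 1 else 0) / (sqrt (real (degree V E y)) * sqrt (real (degree V E z)))"

definition Cf :: "real \<Rightarrow> 'a set \<Rightarrow> ('a \<Rightarrow> 'a \<Rightarrow> bool) \<Rightarrow> 'a \<Rightarrow> 'a \<Rightarrow> real" where
  "Cf x V E y z = (if y = z then x else 0) - Lf V E y z"

lemma nl_mat:
  assumes V: "finite V"
  shows "norm_laplacian V E = mat (card V) (card V) (\<lambda>(i,j). Lf V E (vertex_enum V i) (vertex_enum V j))"
proof (rule eq_matI)
  fix i j assume i: "i < dim_row (mat (card V) (card V) (\<lambda>(i,j). Lf V E (vertex_enum V i) (vertex_enum V j)))"
    and j: "j < dim_col (mat (card V) (card V) (\<lambda>(i,j). Lf V E (vertex_enum V i) (vertex_enum V j)))"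
  let ?ve = "vertex_enum V"
  have inj: "i = j \<longleftrightarrow> ?ve i = ?ve j" using ve_bij[OF V] i j
    by (auto simp: bij_betw_def inj_on_def)
  have "(deg_inv_sqrt_matrix V E * adj_matrix V E * deg_inv_sqrt_matrix V E) $$ (i,j)
     = 1 / sqrt (real (degree V E (?ve i))) * (if E (?ve i) (?ve j) then 1 else 0) * (1 / sqrt (real (degree V E (?ve j))))"
    unfolding deg_inv_sqrt_matrix_def
    by (subst diag_mult_entry) (use i j in \<open>auto simp: adj_matrix_def\<close>)
  moreover have "dim_row (deg_inv_sqrt_matrix V E * adj_matrix V E * deg_inv_sqrt_matrix V E) = card V"
    "dim_col (deg_inv_sqrt_matrix V E * adj_matrix V E * deg_inv_sqrt_matrix V E) = card V"
    by (simp_all add: deg_inv_sqrt_matrix_def adj_matrix_def)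
  ultimately show "norm_laplacian V E $$ (i, j) = mat (card V) (card V) (\<lambda>(i,j). Lf V E (?ve i) (?ve j)) $$ (i, j)"
    using i j unfolding norm_laplacian_def Lf_def
    by (simp add: inj[symmetric])
qed (auto simp: norm_laplacian_def deg_inv_sqrt_matrix_def adj_matrix_def)

lemma nl_carrier: "norm_laplacian V E \<in> carrier_mat (card V) (card V)"
  unfolding norm_laplacian_def deg_inv_sqrt_matrix_def adj_matrix_def
  by (intro minus_carrier_mat mult_carrier_mat) auto

lemma charpoly_graph:
  assumes V: "finite V" and e: "bij_betw e {..<card V} V"
  shows "poly (char_poly (norm_laplacian V E)) x = det (mat (card V) (card V) (\<lambda>(i,j). Cf x V E (e i) (e j)))"
proof -
  let ?ve = "vertex_enum V"
  have "poly (char_poly (norm_laplacian V E)) x = det (mat (card V) (card V) (\<lambda>(i,j). (if i = j then x else 0) - norm_laplacian V E $$ (i,j)))"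
    by (rule charpoly_eval[OF nl_carrier])
  also have "mat (card V) (card V) (\<lambda>(i,j). (if i = j then x else 0) - norm_laplacian V E $$ (i,j))
     = mat (card V) (card V) (\<lambda>(i,j). Cf x V E (?ve i) (?ve j))"
  proof (rule eq_matI)
    fix i j assume i: "i < dim_row (mat (card V) (card V) (\<lambda>(i,j). Cf x V E (?ve i) (?ve j)))"
      and j: "j < dim_col (mat (card V) (card V) (\<lambda>(i,j). Cf x V E (?ve i) (?ve j)))"
    have inj: "i = j \<longleftrightarrow> ?ve i = ?ve j" using ve_bij[OF V] i j
      by (auto simp: bij_betw_def inj_on_def)
    show "mat (card V) (card V) (\<lambda>(i,j). (if i = j then x else 0) - norm_laplacian V E $$ (i,j)) $$ (i, j) =
         mat (card V) (card V) (\<lambda>(i,j). Cf x V E (?ve i) (?ve j)) $$ (i, j)"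
      using i j by (simp add: nl_mat[OF V] Cf_def inj)
  qed auto
  also have "det \<dots> = det (mat (card V) (card V) (\<lambda>(i,j). Cf x V E (e i) (e j)))"
    by (rule det_reindex[OF ve_bij[OF V] e])
  finally show ?thesis .
qed

context
  fixes V :: "'a set" and E :: "'a \<Rightarrow> 'a \<Rightarrow> bool" and k :: nat
  assumes sg: "simple_graph V E" and cg: "connected_graph V E" and cV: "card V \<ge> 2"
begin

lemma finV: "finite V" using sg by (simp add: simple_graph_def)
lemma EV: "E u v \<Longrightarrow> u \<in> V \<and> v \<in> V" using sg by (simp add: simple_graph_def)
lemma Esym: "E u v \<Longrightarrow> E v u" using sg by (simp add: simple_graph_def)
lemma Eirr: "\<not> E u u" using sg by (simp add: simple_graph_def)

lemma finEd: "finite (graph_edges V E)"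
proof -
  have "graph_edges V E \<subseteq> Pow V" by (auto simp: graph_edges_def)
  thus ?thesis using finV by (meson finite_Pow_iff finite_subset)
qed

lemma EdD: "e \<in> graph_edges V E \<Longrightarrow> \<exists>a b. e = {a,b} \<and> a \<noteq> b \<and> a \<in> V \<and> b \<in> V \<and> E a b"
  unfolding graph_edges_def using Eirr by blast

lemma deg_pos: assumes v: "v \<in> V" shows "degree V E v > 0"
proof -
  have "V - {v} \<noteq> {}"
  proof
    assume "V - {v} = {}" hence "V \<subseteq> {v}" by auto
    hence "card V \<le> card {v}" by (intro card_mono) auto
    hence "card V \<le> 1" by simp
    thus False using cV by simp
  qed
  then obtain u where u: "u \<in> V" "u \<noteq> v" by auto
  have "E\<^sup>*\<^sup>* v u" using cg v u by (simp add: connected_graph_def)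
  then obtain w where "E v w" using u(2) by (metis converse_rtranclpE)
  hence "w \<in> {u\<in>V. E v u}" using EV by auto
  moreover have "finite {u\<in>V. E v u}" using finV by simp
  ultimately show ?thesis unfolding degree_def by (auto simp: card_gt_0_iff)
qed

lemma card_inc: assumes v: "v \<in> V"
  shows "card {e\<in>graph_edges V E. v \<in> e} = degree V E v"
proof -
  have "bij_betw (\<lambda>u. {v,u}) {u\<in>V. E v u} {e\<in>graph_edges V E. v \<in> e}"
  proof (rule bij_betw_imageI)
    show "inj_on (\<lambda>u. {v,u}) {u\<in>V. E v u}" by (auto simp: inj_on_def doubleton_eq_iff)
    show "(\<lambda>u. {v,u}) ` {u\<in>V. E v u} = {e\<in>graph_edges V E. v \<in> e}"
    proof
      show "(\<lambda>u. {v,u}) ` {u\<in>V. E v u} \<subseteq> {e\<in>graph_edges V E. v \<in> e}"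
        using v by (auto simp: graph_edges_def)
      show "{e\<in>graph_edges V E. v \<in> e} \<subseteq> (\<lambda>u. {v,u}) ` {u\<in>V. E v u}"
      proof
        fix e assume e: "e \<in> {e\<in>graph_edges V E. v \<in> e}"
        then obtain a b where ab: "e = {a,b}" "a \<in> V" "b \<in> V" "E a b" by (auto simp: graph_edges_def)
        show "e \<in> (\<lambda>u. {v,u}) ` {u\<in>V. E v u}"
        proof (cases "v = a")
          case True thus ?thesis using ab by auto
        next
          case False
          hence "v = b" using e ab by auto
          thus ?thesis using ab Esym by (auto simp: insert_commute)
        qed
      qed
    qed
  qed
  thus ?thesis unfolding degree_def by (simp add: bij_betw_same_card)
qed

lemma common_edges: assumes "a \<in> V" "b \<in> V" "a \<noteq> b"
  shows "{e\<in>graph_edges V E. a \<in> e \<and> b \<in> e} = (if E a b then {{a,b}} else {})"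
proof -
  have "e = {a,b} \<and> E a b" if h: "e \<in> graph_edges V E" "a \<in> e" "b \<in> e" for e
  proof -
    obtain c d where cd: "e = {c,d}" "c \<noteq> d" "E c d" using EdD[OF h(1)] by blast
    have "e = {a,b}" using cd h assms(3) by auto
    moreover have "E a b" using cd h assms(3) Esym by auto
    ultimately show ?thesis by simp
  qed
  moreover have "{a,b} \<in> graph_edges V E" if "E a b" using that assms by (auto simp: graph_edges_def)
  ultimately show ?thesis by auto
qed

lemma adj_LL: "\<not> subdiv_adj k V E (Inl a) (Inl b)" by (simp add: subdiv_adj_def)
lemma adj_RR: "\<not> subdiv_adj k V E (Inr w) (Inr w')" by (simp add: subdiv_adj_def)
lemma adj_LR: "subdiv_adj k V E (Inl a) (Inr (e,j)) \<longleftrightarrow> a \<in> e \<and> e \<in> graph_edges V E \<and> j < k"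
  by (auto simp: subdiv_adj_def graph_edges_def)
lemma adj_RL: "subdiv_adj k V E (Inr (e,j)) (Inl a) \<longleftrightarrow> a \<in> e \<and> e \<in> graph_edges V E \<and> j < k"
  by (auto simp: subdiv_adj_def graph_edges_def)
lemma adj_sym: "subdiv_adj k V E x y \<longleftrightarrow> subdiv_adj k V E y x"
  by (auto simp: subdiv_adj_def)

lemma degS_L: assumes a: "a \<in> V"
  shows "degree (subdiv_vertices k V E) (subdiv_adj k V E) (Inl a) = k * degree V E a"
proof -
  have "{y \<in> subdiv_vertices k V E. subdiv_adj k V E (Inl a) y} = Inr ` ({e\<in>graph_edges V E. a \<in> e} \<times> {..<k})"
    by (auto simp: subdiv_vertices_def adj_LL adj_LR)
  hence "degree (subdiv_vertices k V E) (subdiv_adj k V E) (Inl a) = card ({e\<in>graph_edges V E. a \<in> e} \<times> {..<k})"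
    unfolding degree_def by (simp add: card_image)
  also have "\<dots> = degree V E a * k" using card_inc[OF a] finEd by (simp add: card_cartesian_product)
  finally show ?thesis by simp
qed

lemma degS_R: assumes e: "e \<in> graph_edges V E" and j: "j < k"
  shows "degree (subdiv_vertices k V E) (subdiv_adj k V E) (Inr (e,j)) = 2"
proof -
  obtain a b where ab: "e = {a,b}" "a \<noteq> b" "a \<in> V" "b \<in> V" using EdD[OF e] by blast
  have "{y \<in> subdiv_vertices k V E. subdiv_adj k V E (Inr (e,j)) y} = Inl ` e"
    using e j ab by (auto simp: subdiv_vertices_def adj_RR adj_RL)
  hence "degree (subdiv_vertices k V E) (subdiv_adj k V E) (Inr (e,j)) = card e"
    unfolding degree_def by (simp add: card_image)
  thus ?thesis using ab by simp
qed

lemma finS: "finite (subdiv_vertices k V E)"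
  using finV finEd by (simp add: subdiv_vertices_def)

lemma cardS: "card (subdiv_vertices k V E) = card V + k * card (graph_edges V E)"
  unfolding subdiv_vertices_def
  by (subst card_Un_disjoint) (auto simp: finV finEd card_image card_cartesian_product)

end

lemma det_fb:
  fixes B C :: "real mat" and t :: real
  assumes B: "B \<in> carrier_mat n p" and C: "C \<in> carrier_mat p n" and t: "t \<noteq> 0"
  shows "det (four_block_mat (t \<cdot>\<^sub>m 1\<^sub>m n) B C (t \<cdot>\<^sub>m 1\<^sub>m p))
       = t ^ p * det (t \<cdot>\<^sub>m 1\<^sub>m n - (1/t) \<cdot>\<^sub>m (B * C))"
proof -
  let ?M = "four_block_mat (t \<cdot>\<^sub>m 1\<^sub>m n) B C (t \<cdot>\<^sub>m 1\<^sub>m p)"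
  let ?N = "four_block_mat (1\<^sub>m n) (0\<^sub>m n p) ((-(1/t)) \<cdot>\<^sub>m C) (1\<^sub>m p)"
  have M: "?M \<in> carrier_mat (n+p) (n+p)" using B C by auto
  have N: "?N \<in> carrier_mat (n+p) (n+p)" using B C by auto
  have BC: "B * C \<in> carrier_mat n n" using B C by auto
  have e1: "t \<cdot>\<^sub>m 1\<^sub>m n * 1\<^sub>m n + B * ((-(1/t)) \<cdot>\<^sub>m C) = t \<cdot>\<^sub>m 1\<^sub>m n - (1/t) \<cdot>\<^sub>m (B * C)"
    using B C BC by (subst mult_smult_distrib[OF B C]) (rule eq_matI, auto)
  have e2: "t \<cdot>\<^sub>m 1\<^sub>m n * 0\<^sub>m n p + B * 1\<^sub>m p = B"
    using B by (rule_tac eq_matI) auto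
  have e3: "C * 1\<^sub>m n + t \<cdot>\<^sub>m 1\<^sub>m p * ((-(1/t)) \<cdot>\<^sub>m C) = 0\<^sub>m p n"
    using C t by (subst mult_smult_assoc_mat[of _ p p]) (auto intro!: eq_matI)
  have e4: "C * 0\<^sub>m n p + t \<cdot>\<^sub>m 1\<^sub>m p * 1\<^sub>m p = t \<cdot>\<^sub>m 1\<^sub>m p"
    using C by (rule_tac eq_matI) auto
  have prod: "?M * ?N = four_block_mat (t \<cdot>\<^sub>m 1\<^sub>m n - (1/t) \<cdot>\<^sub>m (B * C)) B (0\<^sub>m p n) (t \<cdot>\<^sub>m 1\<^sub>m p)"
    by (subst mult_four_block_mat[of _ n n _ p _ p _ _ n _ p]) (insert B C, auto simp only: e1 e2 e3 e4 smult_carrier_mat one_carrier_mat zero_carrier_mat) 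
  have dN: "det ?N = 1"
    by (subst det_four_block_mat_upper_right_zero[of _ n _ p]) (insert C, auto)
  have "det ?M = det ?M * det ?N" using dN by simp
  also have "\<dots> = det (?M * ?N)" by (rule det_mult[OF M N, symmetric])
  also have "\<dots> = det (t \<cdot>\<^sub>m 1\<^sub>m n - (1/t) \<cdot>\<^sub>m (B * C)) * det (t \<cdot>\<^sub>m 1\<^sub>m p)"
    unfolding prod by (rule det_four_block_mat_lower_left_zero[of _ n _ p]) (insert B C, auto)
  also have "det (t \<cdot>\<^sub>m 1\<^sub>m p) = t ^ p" by simp
  finally show ?thesis by simp
qed

definition Wf :: "'b set \<Rightarrow> ('b \<Rightarrow> 'b \<Rightarrow> bool) \<Rightarrow> 'b \<Rightarrow> 'b \<Rightarrow> real" where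
  "Wf W R y z = (if R y z then 1 else 0) / (sqrt (real (degree W R y)) * sqrt (real (degree W R z)))"

lemma Lf_Wf: "Lf W R y z = (if y = z then 1 else 0) - Wf W R y z"
  by (simp add: Lf_def Wf_def)

context
  fixes V :: "'a set" and E :: "'a \<Rightarrow> 'a \<Rightarrow> bool" and k :: nat
  assumes sg: "simple_graph V E" and cg: "connected_graph V E" and cV: "card V \<ge> 2" and k: "k \<ge> 1"
begin

lemma BC_sum:
  assumes a: "a \<in> V" and b: "b \<in> V"
  shows "(\<Sum>w\<in>graph_edges V E \<times> {..<k}. Wf (subdiv_vertices k V E) (subdiv_adj k V E) (Inl a) (Inr w)
            * Wf (subdiv_vertices k V E) (subdiv_adj k V E) (Inr w) (Inl b))
       = (if a = b then 1 else 0) - Lf V E a b / 2"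
proof -
  let ?S = "subdiv_vertices k V E" and ?A = "subdiv_adj k V E" and ?Ed = "graph_edges V E"
  define da where "da = real (degree V E a)"
  define db where "db = real (degree V E b)"
  have da: "da > 0" using deg_pos[OF sg cg cV a] by (simp add: da_def)
  have db: "db > 0" using deg_pos[OF sg cg cV b] by (simp add: db_def)
  define c where "c = 1 / (2 * real k * sqrt da * sqrt db)"
  have sk: "sqrt (real k * da) * sqrt (real k * db) = real k * (sqrt da * sqrt db)"
    by (simp add: real_sqrt_mult)
  have trm: "Wf ?S ?A (Inl a) (Inr (e,j)) * Wf ?S ?A (Inr (e,j)) (Inl b) = (if a \<in> e \<and> b \<in> e then c else 0)"
    if e: "e \<in> ?Ed" and j: "j < k" for e j
  proof -
    have "Wf ?S ?A (Inl a) (Inr (e,j)) * Wf ?S ?A (Inr (e,j)) (Inl b)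
      = (if a \<in> e \<and> b \<in> e then 1 else 0) / (2 * (sqrt (real k * da) * sqrt (real k * db)))"
      unfolding Wf_def using e j
      by (simp add: adj_LR[OF sg cg cV] adj_RL[OF sg cg cV] degS_L[OF sg cg cV a] degS_L[OF sg cg cV b]
          degS_R[OF sg cg cV e j] da_def db_def mult_ac)
    also have "\<dots> = (if a \<in> e \<and> b \<in> e then c else 0)"
      unfolding sk c_def by (simp add: mult_ac)
    finally show ?thesis .
  qed
  have "(\<Sum>w\<in>?Ed \<times> {..<k}. Wf ?S ?A (Inl a) (Inr w) * Wf ?S ?A (Inr w) (Inl b))
      = (\<Sum>e\<in>?Ed. \<Sum>j\<in>{..<k}. Wf ?S ?A (Inl a) (Inr (e,j)) * Wf ?S ?A (Inr (e,j)) (Inl b))"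
    by (simp add: sum.cartesian_product case_prod_unfold)
  also have "\<dots> = (\<Sum>e\<in>?Ed. real k * (if a \<in> e \<and> b \<in> e then c else 0))"
    by (intro sum.cong refl) (simp add: trm)
  also have "\<dots> = real k * (\<Sum>e\<in>?Ed. (if a \<in> e \<and> b \<in> e then c else 0))"
    by (simp add: sum_distrib_left)
  also have "(\<Sum>e\<in>?Ed. (if a \<in> e \<and> b \<in> e then c else 0)) = c * real (card {e\<in>?Ed. a \<in> e \<and> b \<in> e})"
    using finEd[OF sg cg cV] by (simp add: sum.inter_filter[symmetric])
  finally have eq: "(\<Sum>w\<in>?Ed \<times> {..<k}. Wf ?S ?A (Inl a) (Inr w) * Wf ?S ?A (Inr w) (Inl b))
      = real k * (c * real (card {e\<in>?Ed. a \<in> e \<and> b \<in> e}))" .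
  have kpos: "real k > 0" using k by simp
  show ?thesis
  proof (cases "a = b")
    case True
    have "card {e\<in>?Ed. a \<in> e \<and> b \<in> e} = degree V E a" using card_inc[OF sg cg cV a] True by simp
    hence cd: "real (card {e\<in>?Ed. a \<in> e \<and> b \<in> e}) = da" by (simp add: da_def)
    have dd: "db = da" using True by (simp add: da_def db_def)
    have sq: "sqrt da * sqrt da = da" using da by simp
    have "c = 1 / (2 * real k * da)" unfolding c_def dd using sq by (simp add: mult.assoc)
    hence "real k * (c * real (card {e\<in>?Ed. a \<in> e \<and> b \<in> e})) = 1/2"
      unfolding cd using da kpos by (simp add: field_simps)
    moreover have "Lf V E a b = 1" using True Eirr[OF sg cg cV] by (simp add: Lf_def)
    ultimately show ?thesis using eq True by simp
  next
    case False
    have "card {e\<in>?Ed. a \<in> e \<and> b \<in> e} = (if E a b then 1 else 0)"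
      using common_edges[OF sg cg cV a b False] by simp
    hence "real k * (c * real (card {e\<in>?Ed. a \<in> e \<and> b \<in> e})) = (if E a b then 1 else 0) / (2 * sqrt da * sqrt db)"
      using kpos unfolding c_def by (simp add: field_simps)
    moreover have "Lf V E a b = - (if E a b then 1 else 0) / (sqrt da * sqrt db)"
      using False by (simp add: Lf_def da_def db_def)
    ultimately show ?thesis using eq False by (simp add: field_simps)
  qed
qed

end

context
  fixes V :: "'a set" and E :: "'a \<Rightarrow> 'a \<Rightarrow> bool" and k :: nat
  assumes sg: "simple_graph V E" and cg: "connected_graph V E" and cV: "card V \<ge> 2" and k: "k \<ge> 1"
begin

lemma key_det:
  assumes x: "x \<noteq> 1"
  shows "poly (char_poly (norm_laplacian (subdiv_vertices k V E) (subdiv_adj k V E))) x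
     = (x - 1) ^ (k * card (graph_edges V E)) * (-1 / (2 * (x - 1))) ^ card V
       * poly (char_poly (norm_laplacian V E)) (4 * x - 2 * x\<^sup>2)"
proof -
  let ?S = "subdiv_vertices k V E" and ?A = "subdiv_adj k V E" and ?Ed = "graph_edges V E"
  define n where "n = card V"
  define p where "p = k * card ?Ed"
  define P where "P = ?Ed \<times> {..<k}"
  define t where "t = x - 1"
  define q where "q = 4 * x - 2 * x\<^sup>2"
  have t: "t \<noteq> 0" using x by (simp add: t_def)
  note finV = finV[OF sg cg cV] and finEd = finEd[OF sg cg cV]
  have finP: "finite P" using finEd by (simp add: P_def)
  have cardP: "card P = p" using finEd by (simp add: P_def p_def card_cartesian_product)
  obtain em where em0: "bij_betw em {0..<p} P" using ex_bij_betw_nat_finite[OF finP] cardP by metis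
  have em: "bij_betw em {..<p} P" using em0 by (simp add: lessThan_atLeast0)
  let ?ve = "vertex_enum V"
  have ve: "bij_betw ?ve {..<n} V" using ve_bij[OF finV] by (simp add: n_def)
  define e2 where "e2 i = (if i < n then Inl (?ve i) else Inr (em (i - n)))" for i
  have e2bij: "bij_betw e2 {..<n+p} ?S"
  proof -
    have b1: "bij_betw e2 {..<n} (Inl ` V)"
    proof -
      have "bij_betw (Inl \<circ> ?ve) {..<n} (Inl ` V)"
        by (rule bij_betw_trans[OF ve]) (simp add: bij_betw_def)
      thus ?thesis by (rule bij_betw_cong[THEN iffD1, rotated]) (simp add: e2_def)
    qed
    have b2: "bij_betw e2 {n..<n+p} (Inr ` P)"
    proof -
      have s: "bij_betw (\<lambda>i. i - n) {n..<n+p} {..<p}"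
        by (rule bij_betw_byWitness[where f' = "\<lambda>i. i + n"]) auto
      have "bij_betw (Inr \<circ> em \<circ> (\<lambda>i. i - n)) {n..<n+p} (Inr ` P)"
        by (rule bij_betw_trans[OF s], rule bij_betw_trans[OF em]) (simp add: bij_betw_def)
      thus ?thesis by (rule bij_betw_cong[THEN iffD1, rotated]) (simp add: e2_def)
    qed
    have "bij_betw e2 ({..<n} \<union> {n..<n+p}) (Inl ` V \<union> Inr ` P)"
      by (rule bij_betw_combine[OF b1 b2]) auto
    moreover have "{..<n} \<union> {n..<n+p} = {..<n+p}" by auto
    ultimately show ?thesis by (simp add: subdiv_vertices_def P_def)
  qed
  have cS: "card ?S = n + p" using cardS[OF sg cg cV] by (simp add: n_def p_def)
  have step1: "poly (char_poly (norm_laplacian ?S ?A)) x = det (mat (n+p) (n+p) (\<lambda>(i,j). Cf x ?S ?A (e2 i) (e2 j)))"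
    using charpoly_graph[OF finS[OF sg cg cV, of k], where e=e2 and E="?A" and x=x] e2bij cS by simp
  define B where "B = mat n p (\<lambda>(i,j). Wf ?S ?A (Inl (?ve i)) (Inr (em j)))"
  define C where "C = mat p n (\<lambda>(i,j). Wf ?S ?A (Inr (em i)) (Inl (?ve j)))"
  have B: "B \<in> carrier_mat n p" and C: "C \<in> carrier_mat p n" by (simp_all add: B_def C_def)
  have veinj: "i < n \<Longrightarrow> j < n \<Longrightarrow> ?ve i = ?ve j \<longleftrightarrow> i = j" for i j
    using ve by (auto simp: bij_betw_def inj_on_def)
  have eminj: "i < p \<Longrightarrow> j < p \<Longrightarrow> em i = em j \<longleftrightarrow> i = j" for i j
    using em by (auto simp: bij_betw_def inj_on_def)
  have step2: "mat (n+p) (n+p) (\<lambda>(i,j). Cf x ?S ?A (e2 i) (e2 j)) = four_block_mat (t \<cdot>\<^sub>m 1\<^sub>m n) B C (t \<cdot>\<^sub>m 1\<^sub>m p)"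
  proof (rule eq_matI)
    fix i j assume i: "i < dim_row (four_block_mat (t \<cdot>\<^sub>m 1\<^sub>m n) B C (t \<cdot>\<^sub>m 1\<^sub>m p))"
      and j: "j < dim_col (four_block_mat (t \<cdot>\<^sub>m 1\<^sub>m n) B C (t \<cdot>\<^sub>m 1\<^sub>m p))"
    hence i': "i < n + p" and j': "j < n + p" using B by auto
    show "mat (n+p) (n+p) (\<lambda>(i,j). Cf x ?S ?A (e2 i) (e2 j)) $$ (i, j) = four_block_mat (t \<cdot>\<^sub>m 1\<^sub>m n) B C (t \<cdot>\<^sub>m 1\<^sub>m p) $$ (i, j)"
    proof (cases "i < n"; cases "j < n")
      assume "i < n" "j < n" thus ?thesis using i' j' B
        by (simp add: e2_def Cf_def Lf_Wf Wf_def adj_LL[OF sg cg cV] veinj t_def)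
    next
      assume "i < n" "\<not> j < n" thus ?thesis using i' j' B
        by (simp add: e2_def Cf_def Lf_Wf B_def)
    next
      assume "\<not> i < n" "j < n" thus ?thesis using i' j' B
        by (simp add: e2_def Cf_def Lf_Wf C_def)
    next
      assume "\<not> i < n" "\<not> j < n"
      moreover have "em (i - n) = em (j - n) \<longleftrightarrow> i = j" using i' j' \<open>\<not> i < n\<close> \<open>\<not> j < n\<close> eminj by auto
      ultimately show ?thesis using i' j' B
        by (auto simp: e2_def Cf_def Lf_Wf Wf_def adj_RR[OF sg cg cV] t_def)
    qed
  qed (use B in auto)
  have BC: "(B * C) $$ (i,j) = (if i = j then 1 else 0) - Lf V E (?ve i) (?ve j) / 2" if i: "i < n" and j: "j < n" for i j
  proof -
    have vi: "?ve i \<in> V" and vj: "?ve j \<in> V" using ve i j by (auto simp: bij_betw_def)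
    have "(B * C) $$ (i,j) = (\<Sum>l\<in>{0..<p}. Wf ?S ?A (Inl (?ve i)) (Inr (em l)) * Wf ?S ?A (Inr (em l)) (Inl (?ve j)))"
      using i j B C by (simp add: scalar_prod_def B_def C_def)
    also have "\<dots> = (\<Sum>w\<in>P. Wf ?S ?A (Inl (?ve i)) (Inr w) * Wf ?S ?A (Inr w) (Inl (?ve j)))"
      using sum.reindex_bij_betw[OF em0, of "\<lambda>w. Wf ?S ?A (Inl (?ve i)) (Inr w) * Wf ?S ?A (Inr w) (Inl (?ve j))"] by simp
    also have "\<dots> = (if ?ve i = ?ve j then 1 else 0) - Lf V E (?ve i) (?ve j) / 2"
      unfolding P_def by (rule BC_sum[OF sg cg cV k vi vj])
    finally show ?thesis using veinj[OF i j] by simp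
  qed
  have step4: "t \<cdot>\<^sub>m 1\<^sub>m n - (1/t) \<cdot>\<^sub>m (B * C) = (-1 / (2 * t)) \<cdot>\<^sub>m mat n n (\<lambda>(i,j). Cf q V E (?ve i) (?ve j))"
  proof (rule eq_matI)
    fix i j assume i: "i < dim_row ((-1 / (2 * t)) \<cdot>\<^sub>m mat n n (\<lambda>(i,j). Cf q V E (?ve i) (?ve j)))"
      and j: "j < dim_col ((-1 / (2 * t)) \<cdot>\<^sub>m mat n n (\<lambda>(i,j). Cf q V E (?ve i) (?ve j)))"
    hence i': "i < n" and j': "j < n" by auto
    have "(t \<cdot>\<^sub>m 1\<^sub>m n - (1/t) \<cdot>\<^sub>m (B * C)) $$ (i,j) = t * (if i = j then 1 else 0) - (1/t) * ((if i = j then 1 else 0) - Lf V E (?ve i) (?ve j) / 2)"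
      using i' j' B C BC[OF i' j'] by simp
    also have "\<dots> = (-1 / (2 * t)) * Cf q V E (?ve i) (?ve j)"
      using t veinj[OF i' j'] by (auto simp: Cf_def q_def t_def field_simps power2_eq_square)
    finally show "(t \<cdot>\<^sub>m 1\<^sub>m n - (1/t) \<cdot>\<^sub>m (B * C)) $$ (i,j) = ((-1 / (2 * t)) \<cdot>\<^sub>m mat n n (\<lambda>(i,j). Cf q V E (?ve i) (?ve j))) $$ (i,j)"
      using i' j' by simp
  qed (use B C in auto)
  have step5: "det (mat n n (\<lambda>(i,j). Cf q V E (?ve i) (?ve j))) = poly (char_poly (norm_laplacian V E)) q"
    using charpoly_graph[OF finV ve_bij[OF finV], of E q] by (simp add: n_def)
  have "poly (char_poly (norm_laplacian ?S ?A)) x = t ^ p * det (t \<cdot>\<^sub>m 1\<^sub>m n - (1/t) \<cdot>\<^sub>m (B * C))"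
    unfolding step1 step2 by (rule det_fb[OF B C t])
  also have "\<dots> = t ^ p * ((-1 / (2 * t)) ^ n * poly (char_poly (norm_laplacian V E)) q)"
    unfolding step4 by (simp add: step5)
  finally show ?thesis by (simp add: t_def p_def n_def q_def)
qed

end

lemma charpoly_nz: "char_poly (A :: real mat) \<noteq> 0" if "A \<in> carrier_mat n n"
  using degree_monic_char_poly[OF that] by auto

theorem lemma3p1:
  fixes V :: "'a set" and E :: "'a \<Rightarrow> 'a \<Rightarrow> bool" and k :: nat and \<sigma> :: real
  assumes "simple_graph V E" and "connected_graph V E" and "card V \<ge> 2"
    and "k \<ge> 1"
    and "\<sigma> \<noteq> 1"
    and "eigenvalue (norm_laplacian (subdiv_vertices k V E) (subdiv_adj k V E)) \<sigma>"
  shows "eigenvalue (norm_laplacian V E) (4 * \<sigma> - 2 * \<sigma>\<^sup>2)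
    \<and> order (4 * \<sigma> - 2 * \<sigma>\<^sup>2) (char_poly (norm_laplacian V E))
      = order \<sigma> (char_poly (norm_laplacian (subdiv_vertices k V E) (subdiv_adj k V E)))"
proof -
  note sg = assms(1) and cg = assms(2) and cV = assms(3) and k = assms(4) and s1 = assms(5)
  let ?LS = "norm_laplacian (subdiv_vertices k V E) (subdiv_adj k V E)"
  let ?LG = "norm_laplacian V E"
  define n where "n = card V"
  define p where "p = k * card (graph_edges V E)"
  define R :: "real poly" where "R = [:-1, 1:]"
  define Q :: "real poly" where "Q = [:0, 4, -2:]"
  have LS: "?LS \<in> carrier_mat (card (subdiv_vertices k V E)) (card (subdiv_vertices k V E))"
    by (rule nl_carrier)
  have LG: "?LG \<in> carrier_mat (card V) (card V)" by (rule nl_carrier)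
  have polyQ: "poly Q x = 4 * x - 2 * x\<^sup>2" for x
    by (simp add: Q_def algebra_simps power2_eq_square)
  have kd: "poly (char_poly ?LS) x = (x - 1) ^ p * (-1 / (2 * (x - 1))) ^ n * poly (char_poly ?LG) (4 * x - 2 * x\<^sup>2)"
    if "x \<noteq> 1" for x
    using key_det[OF sg cg cV k that] by (simp add: n_def p_def)
  have pid: "Polynomial.smult ((-2) ^ n) (R ^ n * char_poly ?LS) = R ^ p * pcompose (char_poly ?LG) Q"
  proof (rule ccontr)
    let ?D = "Polynomial.smult ((-2) ^ n) (R ^ n * char_poly ?LS) - R ^ p * pcompose (char_poly ?LG) Q"
    assume ne: "Polynomial.smult ((-2) ^ n) (R ^ n * char_poly ?LS) \<noteq> R ^ p * pcompose (char_poly ?LG) Q"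
    hence "?D \<noteq> 0" by simp
    hence fin: "finite {x. poly ?D x = 0}" by (rule poly_roots_finite)
    have "{x. x \<noteq> (1::real)} \<subseteq> {x. poly ?D x = 0}"
    proof
      fix x :: real assume "x \<in> {x. x \<noteq> 1}"
      hence x: "x \<noteq> 1" by simp
      hence t: "x - 1 \<noteq> 0" by simp
      have one: "(-2) ^ n * (x - 1) ^ n * (-1 / (2 * (x - 1))) ^ n = (1::real)"
      proof -
        have "(-2) ^ n * (x - 1) ^ n * (-1 / (2 * (x - 1))) ^ n = ((-2) * (x - 1) * (-1 / (2 * (x - 1)))) ^ n"
          by (simp only: power_mult_distrib)
        also have "(-2) * (x - 1) * (-1 / (2 * (x - 1))) = 1" using t by (simp add: field_simps)
        finally show ?thesis by simp
      qed
      have "poly (Polynomial.smult ((-2) ^ n) (R ^ n * char_poly ?LS)) x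
          = (-2) ^ n * (x - 1) ^ n * ((x - 1) ^ p * (-1 / (2 * (x - 1))) ^ n * poly (char_poly ?LG) (4 * x - 2 * x\<^sup>2))"
        by (simp add: R_def kd[OF x])
      also have "\<dots> = ((-2) ^ n * (x - 1) ^ n * (-1 / (2 * (x - 1))) ^ n) * ((x - 1) ^ p * poly (char_poly ?LG) (4 * x - 2 * x\<^sup>2))"
        by (simp add: mult_ac)
      also have "\<dots> = poly (R ^ p * pcompose (char_poly ?LG) Q) x"
        unfolding one by (simp add: R_def poly_pcompose polyQ)
      finally show "x \<in> {x. poly ?D x = 0}" by simp
    qed
    moreover have "infinite {x. x \<noteq> (1::real)}"
    proof
      assume "finite {x. x \<noteq> (1::real)}"
      hence "finite (insert 1 {x. x \<noteq> (1::real)})" by simp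
      moreover have "insert 1 {x. x \<noteq> (1::real)} = UNIV" by auto
      ultimately show False by (simp add: infinite_UNIV_char_0)
    qed
    ultimately show False using fin finite_subset by blast
  qed
  have cS: "char_poly ?LS \<noteq> 0" by (rule charpoly_nz[OF LS])
  have cG: "char_poly ?LG \<noteq> 0" by (rule charpoly_nz[OF LG])
  have Rn: "R ^ m \<noteq> 0" for m by (simp add: R_def)
  have oR: "order \<sigma> (R ^ m) = 0" for m
    by (rule order_0I) (use s1 in \<open>simp add: R_def\<close>)
  have lhs_nz: "R ^ n * char_poly ?LS \<noteq> 0" using Rn cS by simp
  have rhs_nz: "R ^ p * pcompose (char_poly ?LG) Q \<noteq> 0"
    using pid[symmetric] lhs_nz by simp
  hence pc_nz: "pcompose (char_poly ?LG) Q \<noteq> 0" by auto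
  have "order \<sigma> (char_poly ?LS) = order \<sigma> (Polynomial.smult ((-2) ^ n) (R ^ n * char_poly ?LS))"
    by (simp add: order_smult order_mult[OF lhs_nz] oR)
  also have "\<dots> = order \<sigma> (pcompose (char_poly ?LG) Q)"
    unfolding pid by (simp add: order_mult[OF rhs_nz] oR)
  also have "\<dots> = order (4 * \<sigma> - 2 * \<sigma>\<^sup>2) (char_poly ?LG)"
    unfolding Q_def by (rule order_pcompose_quad[OF cG s1])
  finally have ord: "order (4 * \<sigma> - 2 * \<sigma>\<^sup>2) (char_poly ?LG) = order \<sigma> (char_poly ?LS)" by simp
  have "poly (char_poly ?LS) \<sigma> = 0"
    using assms(6) eigenvalue_root_char_poly[OF LS] by simp
  hence "(\<sigma> - 1) ^ p * (-1 / (2 * (\<sigma> - 1))) ^ n * poly (char_poly ?LG) (4 * \<sigma> - 2 * \<sigma>\<^sup>2) = 0"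
    using kd[OF s1] by simp
  hence "poly (char_poly ?LG) (4 * \<sigma> - 2 * \<sigma>\<^sup>2) = 0" using s1 by simp
  hence "eigenvalue ?LG (4 * \<sigma> - 2 * \<sigma>\<^sup>2)" using eigenvalue_root_char_poly[OF LG] by simp
  with ord show ?thesis by simp
qed

end
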